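(* Let $\mathbf{x}$ be a feasible solution of $\textsc{Dir-MC-Rel}$. For each edge $e=(u,v)\in E$, let $a_1(u)\le a_2(u)$ be the two smallest values in the multiset $\{d_G(s_1,u),\dots,d_G(s_k,u)\}$, and define $I_1(e)=[a_1(u),a_1(u)+x_e)$ and $I_2(e)=[a_2(u),a_2(u)+x_e)$. For $\theta\in(0,1)$ let $C'(\theta)=\{e\in E:\theta\in I_1(e)\cup I_2(e)\}$. Then for every $\theta\in(0,1)$, $C'(\theta)\supseteq C(\theta)$ and $C'(\theta)$ is a directed multiway cut; and if $\theta$ is uniform on $(0,1)$ then $\Pr[e\in C'(\theta)]\le 2x_e$ for every $e\in E$, so $\mathbb{E}[w(C'(\theta))]\le 2\sum_e w_ex_e$.
   Context: $G=(V,E)$ is a directed graph with non-negative edge weights $w_e$ and distinct terminals $s_1,\dots,s_k$, $k\ge2$. A directed multiway cut is $E'\subseteq E$ such that $G-E'$ has no directed path from $s_i$ to $s_j$ for $i\neq j$; $w(E')=\sum_{e\in E'}w_e$. For $i\neq j$, $\mathcal{P}_{ij}$ is the set of directed paths from $s_i$ to $s_j$ in $G$. $\textsc{Dir-MC-Rel}$: minimize $\sum_e w_e x_e$ s.t. $\sum_{e\in p}x_e\ge1$ for all $p\in\mathcal{P}_{ij}$, $i\ne j$, and $x\ge0$. $d_G(a,b)$ is the shortest directed path length from $a$ to $b$ in $G$ with edge lengths $\mathbf{x}$ ($+\infty$ if none). Form $G^+$ by adding new vertices $t_1,\dots,t_k$ and edges $(t_i,s_j)$ for all $i\neq j$ with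 $x$-value $0$; $d$ denotes shortest-path distance in $G^+$ w.r.t. $\mathbf{x}$; $B(v,r)=\{u:d(v,u)\le r\}$; $\delta^+(A)$ is the set of edges of $G^+$ with tail in $A$ and head outside $A$; $C(\theta)=\bigcup_{i=1}^k\delta^+(B(t_i,\theta))$. *)

theory Defs
  imports "HOL-Analysis.Analysis"
begin

definition dpath :: "('a \<times> 'a) set \<Rightarrow> 'a list \<Rightarrow> bool" where
  "dpath E p \<longleftrightarrow> p \<noteq> [] \<and> distinct p \<and> (\<forall>i. Suc i < length p \<longrightarrow> (p ! i, p ! Suc i) \<in> E)"

definition path_edges :: "'a list \<Rightarrow> ('a \<times> 'a) list" where
  "path_edges p = zip p (tl p)"

definition path_len :: "('a \<times> 'a \<Rightarrow> real) \<Rightarrow> 'a list \<Rightarrow> real" where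
  "path_len x p = sum_list (map x (path_edges p))"

text \<open>Shortest directed path length from a to b w.r.t. edge lengths x (+\<infinity> if none).\<close>
definition dist_in :: "('a \<times> 'a) set \<Rightarrow> ('a \<times> 'a \<Rightarrow> real) \<Rightarrow> 'a \<Rightarrow> 'a \<Rightarrow> ereal" where
  "dist_in E x a b = Inf {ereal (path_len x p) | p. dpath E p \<and> hd p = a \<and> last p = b}"

definition dir_multiway_cut :: "('a \<times> 'a) set \<Rightarrow> (nat \<Rightarrow> 'a) \<Rightarrow> nat \<Rightarrow> ('a \<times> 'a) set \<Rightarrow> bool" where
  "dir_multiway_cut E s k E' \<longleftrightarrow> E' \<subseteq> E \<and>
     (\<forall>i\<in>{1..k}. \<forall>j\<in>{1..k}. i \<noteq> j \<longrightarrow>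
        \<not> (\<exists>p. dpath (E - E') p \<and> hd p = s i \<and> last p = s j))"

definition dir_mc_rel_feasible :: "('a \<times> 'a) set \<Rightarrow> (nat \<Rightarrow> 'a) \<Rightarrow> nat \<Rightarrow> ('a \<times> 'a \<Rightarrow> real) \<Rightarrow> bool" where
  "dir_mc_rel_feasible E s k x \<longleftrightarrow> (\<forall>e\<in>E. 0 \<le> x e) \<and>
     (\<forall>i\<in>{1..k}. \<forall>j\<in>{1..k}. i \<noteq> j \<longrightarrow>
        (\<forall>p. dpath E p \<and> hd p = s i \<and> last p = s j \<longrightarrow> 1 \<le> path_len x p))"

text \<open>Vertices of G+ : Inl v for v in G, Inr i for the new vertex t_i.\<close>
definition plus_edges :: "('a \<times> 'a) set \<Rightarrow> (nat \<Rightarrow> 'a) \<Rightarrow> nat \<Rightarrow> (('a + nat) \<times> ('a + nat)) set" where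
  "plus_edges E s k = {(Inl u, Inl v) | u v. (u, v) \<in> E}
     \<union> {(Inr i, Inl (s j)) | i j. i \<in> {1..k} \<and> j \<in> {1..k} \<and> i \<noteq> j}"

definition plus_len :: "('a \<times> 'a \<Rightarrow> real) \<Rightarrow> ('a + nat) \<times> ('a + nat) \<Rightarrow> real" where
  "plus_len x e = (case e of (Inl u, Inl v) \<Rightarrow> x (u, v) | _ \<Rightarrow> 0)"

definition lift_edge :: "'a \<times> 'a \<Rightarrow> ('a + nat) \<times> ('a + nat)" where
  "lift_edge e = (Inl (fst e), Inl (snd e))"

definition dplus :: "('a \<times> 'a) set \<Rightarrow> (nat \<Rightarrow> 'a) \<Rightarrow> nat \<Rightarrow> ('a \<times> 'a \<Rightarrow> real) \<Rightarrow> 'a + nat \<Rightarrow> 'a + nat \<Rightarrow> ereal" where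
  "dplus E s k x = dist_in (plus_edges E s k) (plus_len x)"

definition ball_plus :: "('a \<times> 'a) set \<Rightarrow> (nat \<Rightarrow> 'a) \<Rightarrow> nat \<Rightarrow> ('a \<times> 'a \<Rightarrow> real) \<Rightarrow> 'a + nat \<Rightarrow> real \<Rightarrow> ('a + nat) set" where
  "ball_plus E s k x v r = {u. dplus E s k x v u \<le> ereal r}"

definition out_cut :: "('b \<times> 'b) set \<Rightarrow> 'b set \<Rightarrow> ('b \<times> 'b) set" where
  "out_cut F A = {(a, b) \<in> F. a \<in> A \<and> b \<notin> A}"

definition C_cut :: "('a \<times> 'a) set \<Rightarrow> (nat \<Rightarrow> 'a) \<Rightarrow> nat \<Rightarrow> ('a \<times> 'a \<Rightarrow> real) \<Rightarrow> real \<Rightarrow> (('a + nat) \<times> ('a + nat)) set" where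
  "C_cut E s k x \<theta> = (\<Union>i\<in>{1..k}. out_cut (plus_edges E s k) (ball_plus E s k x (Inr i) \<theta>))"

definition a1 :: "('a \<times> 'a) set \<Rightarrow> (nat \<Rightarrow> 'a) \<Rightarrow> nat \<Rightarrow> ('a \<times> 'a \<Rightarrow> real) \<Rightarrow> 'a \<Rightarrow> ereal" where
  "a1 E s k x u = sort (map (\<lambda>i. dist_in E x (s i) u) [1..<Suc k]) ! 0"

definition a2 :: "('a \<times> 'a) set \<Rightarrow> (nat \<Rightarrow> 'a) \<Rightarrow> nat \<Rightarrow> ('a \<times> 'a \<Rightarrow> real) \<Rightarrow> 'a \<Rightarrow> ereal" where
  "a2 E s k x u = sort (map (\<lambda>i. dist_in E x (s i) u) [1..<Suc k]) ! 1"

text \<open>Half-open interval [a, a + x_e) of reals (empty if a = +\<infinity>).\<close>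
definition hint :: "ereal \<Rightarrow> real \<Rightarrow> real set" where
  "hint a l = {\<theta>. a \<le> ereal \<theta> \<and> ereal \<theta> < a + ereal l}"

definition I1 :: "('a \<times> 'a) set \<Rightarrow> (nat \<Rightarrow> 'a) \<Rightarrow> nat \<Rightarrow> ('a \<times> 'a \<Rightarrow> real) \<Rightarrow> 'a \<times> 'a \<Rightarrow> real set" where
  "I1 E s k x e = hint (a1 E s k x (fst e)) (x e)"

definition I2 :: "('a \<times> 'a) set \<Rightarrow> (nat \<Rightarrow> 'a) \<Rightarrow> nat \<Rightarrow> ('a \<times> 'a \<Rightarrow> real) \<Rightarrow> 'a \<times> 'a \<Rightarrow> real set" where
  "I2 E s k x e = hint (a2 E s k x (fst e)) (x e)"

definition C' :: "('a \<times> 'a) set \<Rightarrow> (nat \<Rightarrow> 'a) \<Rightarrow> nat \<Rightarrow> ('a \<times> 'a \<Rightarrow> real) \<Rightarrow> real \<Rightarrow> ('a \<times> 'a) set" where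
  "C' E s k x \<theta> = {e \<in> E. \<theta> \<in> I1 E s k x e \<union> I2 E s k x e}"

end

theory Submission
  imports Defs
begin

lemma path_len_nth: "path_len x p = (\<Sum>i<length p - 1. x (p!i, p!Suc i))"
  unfolding path_len_def path_edges_def
  by (simp add: sum_list_sum_nth nth_tl atLeast0LessThan)

lemma path_len_nonneg:
  assumes "dpath E p" "\<forall>e\<in>E. 0 \<le> x e" shows "0 \<le> path_len x p"
  unfolding path_len_nth using assms unfolding dpath_def
  by (intro sum_nonneg) auto

lemma dist_in_le: "dpath E p \<Longrightarrow> hd p = a \<Longrightarrow> last p = b \<Longrightarrow> dist_in E x a b \<le> ereal (path_len x p)"
  unfolding dist_in_def by (rule Inf_lower) blast

lemma dist_in_ge: "(\<And>p. dpath E p \<Longrightarrow> hd p = a \<Longrightarrow> last p = b \<Longrightarrow> c \<le> ereal (path_len x p)) \<Longrightarrow> c \<le> dist_in E x a b"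
  unfolding dist_in_def by (rule Inf_greatest) blast

lemma dist_in_nonneg: "\<forall>e\<in>E. 0 \<le> x e \<Longrightarrow> 0 \<le> dist_in E x a b"
  by (rule dist_in_ge) (simp add: path_len_nonneg)

lemma path_extend:
  assumes p: "dpath E p" "hd p = a" "last p = u" and uv: "(u,v) \<in> E" and nn: "\<forall>e\<in>E. 0 \<le> x e"
  shows "\<exists>q. dpath E q \<and> hd q = a \<and> last q = v \<and> path_len x q \<le> path_len x p + x (u,v)"
proof (cases "v \<in> set p")
  case True
  then obtain m where m: "m < length p" "p ! m = v" by (auto simp: in_set_conv_nth)
  define q where "q = take (Suc m) p"
  have pne: "p \<noteq> []" using p unfolding dpath_def by auto
  have "dpath E q" using p(1) m unfolding q_def dpath_def by auto
  moreover have "hd q = a" using p pne unfolding q_def by (simp add: hd_take)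
  moreover have "last q = v" using m unfolding q_def by (subst last_conv_nth) (auto simp: min_def intro: arg_cong[where f="(!) p"])
  moreover have "path_len x q \<le> path_len x p + x (u,v)"
  proof -
    have "path_len x q = (\<Sum>i<m. x (p!i, p!Suc i))"
      unfolding path_len_nth q_def using m by (intro sum.cong) auto
    also have "\<dots> \<le> path_len x p" unfolding path_len_nth
      using m p(1) nn unfolding dpath_def by (intro sum_mono2) auto
    finally show ?thesis using nn uv by auto
  qed
  ultimately show ?thesis by blast
next
  case False
  define q where "q = p @ [v]"
  have pne: "p \<noteq> []" using p unfolding dpath_def by auto
  have lastp: "p ! (length p - 1) = u" using p(3) pne by (simp add: last_conv_nth)
  have "dpath E q" unfolding dpath_def q_def
  proof (intro conjI allI impI)
    fix i assume i: "Suc i < length (p @ [v])"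
    show "((p @ [v]) ! i, (p @ [v]) ! Suc i) \<in> E"
    proof (cases "Suc i < length p")
      case True then show ?thesis using p(1) unfolding dpath_def by (auto simp: nth_append)
    next
      case False then have "i = length p - 1" using i by auto
      then show ?thesis using uv lastp pne by (auto simp: nth_append)
    qed
  qed (use p False in \<open>auto simp: dpath_def\<close>)
  moreover have "hd q = a" using p pne unfolding q_def by simp
  moreover have "last q = v" unfolding q_def by simp
  moreover have "path_len x q = path_len x p + x (u,v)"
  proof -
    have L: "length p = Suc (length p - 1)" using pne by simp
    have "path_len x q = (\<Sum>i<Suc (length p - 1). x (q!i, q!Suc i))"
      unfolding path_len_nth q_def using L by (metis length_append_singleton diff_Suc_1)
    also have "\<dots> = (\<Sum>i<length p - 1. x (q!i, q!Suc i)) + x (q!(length p - 1), q!Suc (length p - 1))"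
      by simp
    also have "(\<Sum>i<length p - 1. x (q!i, q!Suc i)) = path_len x p"
      unfolding path_len_nth q_def by (intro sum.cong) (auto simp: nth_append)
    also have "q!(length p - 1) = u" unfolding q_def using lastp pne by (simp add: nth_append)
    also have "q!Suc (length p - 1) = v" unfolding q_def using L by (metis nth_append_length)
    finally show ?thesis .
  qed
  ultimately show ?thesis by auto
qed

lemma dist_triangle:
  assumes uv: "(u,v) \<in> E" and nn: "\<forall>e\<in>E. 0 \<le> x e"
  shows "dist_in E x a v \<le> dist_in E x a u + ereal (x (u,v))"
proof -
  have "dist_in E x a v - ereal (x (u,v)) \<le> dist_in E x a u"
  proof (rule dist_in_ge)
    fix p assume "dpath E p" "hd p = a" "last p = u"
    then obtain q where q: "dpath E q" "hd q = a" "last q = v" "path_len x q \<le> path_len x p + x (u,v)"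
      using path_extend[OF _ _ _ uv nn] by blast
    have "dist_in E x a v \<le> ereal (path_len x q)" using q by (intro dist_in_le)
    also have "\<dots> \<le> ereal (path_len x p) + ereal (x (u,v))" using q(4) by simp
    finally show "dist_in E x a v - ereal (x (u,v)) \<le> ereal (path_len x p)"
      by (simp add: ereal_minus_le)
  qed
  then show ?thesis by (simp add: ereal_minus_le)
qed


lemma plus_edges_head: "(a, b) \<in> plus_edges E s k \<Longrightarrow> \<exists>v. b = Inl v"
  unfolding plus_edges_def by auto

lemma plus_edges_Inl: "((Inl a, Inl b) \<in> plus_edges E s k) = ((a,b) \<in> E)"
  unfolding plus_edges_def by auto

lemma plus_edges_Inr: "((Inr i, Inl b) \<in> plus_edges E s k) = (\<exists>j. i \<in> {1..k} \<and> j \<in> {1..k} \<and> i \<noteq> j \<and> b = s j)"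
  unfolding plus_edges_def by auto

lemma lift_path:
  assumes q: "dpath E q" "hd q = s l" and l: "l \<in> {1..k}" "i \<in> {1..k}" "l \<noteq> i"
  shows "dpath (plus_edges E s k) (Inr i # map Inl q)"
    and "path_len (plus_len x) (Inr i # map Inl q) = path_len x q"
proof -
  have qne: "q \<noteq> []" using q unfolding dpath_def by auto
  show "dpath (plus_edges E s k) (Inr i # map Inl q)"
    unfolding dpath_def
  proof (intro conjI allI impI)
    show "distinct (Inr i # map Inl q)" using q unfolding dpath_def by (simp add: distinct_map image_iff)
    fix m assume m: "Suc m < length (Inr i # map Inl q)"
    show "((Inr i # map Inl q) ! m, (Inr i # map Inl q) ! Suc m) \<in> plus_edges E s k"
    proof (cases m)
      case 0
      have "(Inr i, Inl (s l)) \<in> plus_edges E s k" using l unfolding plus_edges_Inr by blast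
      moreover have "q ! 0 = s l" using q(2) qne by (simp add: hd_conv_nth)
      ultimately show ?thesis using 0 qne by simp
    next
      case (Suc m')
      then have "(q ! m', q ! Suc m') \<in> E" using q m unfolding dpath_def by simp
      then show ?thesis using Suc m by (simp add: plus_edges_Inl)
    qed
  qed simp
  obtain n where L: "length q = Suc n" using qne by (cases q) auto
  have "path_len (plus_len x) (Inr i # map Inl q)
      = (\<Sum>m<Suc n. plus_len x ((Inr i # map Inl q)!m, (Inr i # map Inl q)!Suc m))"
    unfolding path_len_nth using L by simp
  also have "\<dots> = (\<Sum>m<n. plus_len x ((Inr i # map Inl q)!Suc m, (Inr i # map Inl q)!Suc (Suc m)))"
    by (subst sum.lessThan_Suc_shift) (simp add: plus_len_def)
  also have "\<dots> = path_len x q" unfolding path_len_nth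
  proof (intro sum.cong)
    show "{..<n} = {..<length q - 1}" using L by simp
    fix m assume "m \<in> {..<length q - 1}"
    then have "Suc m < length q" using L by simp
    then show "plus_len x ((Inr i # map Inl q)!Suc m, (Inr i # map Inl q)!Suc (Suc m)) = x (q ! m, q ! Suc m)"
      by (simp add: plus_len_def)
  qed
  finally show "path_len (plus_len x) (Inr i # map Inl q) = path_len x q" .
qed

lemma unlift_path:
  assumes P: "dpath (plus_edges E s k) P" "hd P = Inr i" "last P = Inl u"
  shows "\<exists>l q. l \<in> {1..k} \<and> l \<noteq> i \<and> dpath E q \<and> hd q = s l \<and> last q = u \<and> P = Inr i # map Inl q"
proof -
  have Pne: "P \<noteq> []" using P unfolding dpath_def by auto
  then obtain R where PR: "P = Inr i # R" using P(2) by (cases P) auto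
  have Rne: "R \<noteq> []" using P(3) PR by auto
  have RInl: "\<exists>v. R ! m = Inl v" if "m < length R" for m
  proof -
    have "(P ! m, P ! Suc m) \<in> plus_edges E s k" using P(1) that PR unfolding dpath_def by auto
    then show ?thesis using PR plus_edges_head by fastforce
  qed
  define q where "q = map projl R"
  have Rq: "R = map Inl q" unfolding q_def
    by (rule nth_equalityI) (auto dest!: RInl)
  have "dpath E q" unfolding dpath_def
  proof (intro conjI allI impI)
    show "q \<noteq> []" using Rne Rq by auto
    show "distinct q" using P(1) PR Rq unfolding dpath_def by (auto simp: distinct_map)
    fix m assume "Suc m < length q"
    then have "(P ! Suc m, P ! Suc (Suc m)) \<in> plus_edges E s k" using P(1) PR Rq unfolding dpath_def by auto
    then show "(q ! m, q ! Suc m) \<in> E" using PR Rq \<open>Suc m < length q\<close> by (auto simp: plus_edges_Inl)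
  qed
  moreover have "last q = u" using P(3) PR Rq Rne by (auto simp: last_map)
  moreover obtain l where "l \<in> {1..k}" "l \<noteq> i" "hd q = s l"
  proof -
    have "(P ! 0, P ! 1) \<in> plus_edges E s k" using P(1) PR Rne unfolding dpath_def by auto
    then have "(Inr i, Inl (hd q)) \<in> plus_edges E s k" using PR Rq Rne by (auto simp: hd_conv_nth)
    then show ?thesis using that by (auto simp: plus_edges_Inr)
  qed
  ultimately show ?thesis using PR Rq by blast
qed

definition gmin :: "('a \<times> 'a) set \<Rightarrow> (nat \<Rightarrow> 'a) \<Rightarrow> nat \<Rightarrow> ('a \<times> 'a \<Rightarrow> real) \<Rightarrow> nat \<Rightarrow> 'a \<Rightarrow> ereal" where
  "gmin E s k x j u = Min ((\<lambda>l. dist_in E x (s l) u) ` ({1..k} - {j}))"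

lemma rest_ne: "k \<ge> 2 \<Longrightarrow> {1..k} - {j::nat} \<noteq> {}"
proof -
  assume "k \<ge> 2"
  then have "1 \<in> {1..k} - {j} \<or> 2 \<in> {1..k} - {j}" by auto
  then show ?thesis by blast
qed

lemma gmin_le: "l \<in> {1..k} \<Longrightarrow> l \<noteq> j \<Longrightarrow> gmin E s k x j u \<le> dist_in E x (s l) u"
  unfolding gmin_def by (intro Min_le) auto

lemma gmin_in: "k \<ge> 2 \<Longrightarrow> \<exists>l\<in>{1..k}. l \<noteq> j \<and> gmin E s k x j u = dist_in E x (s l) u"
proof -
  assume "k \<ge> 2"
  have "gmin E s k x j u \<in> (\<lambda>l. dist_in E x (s l) u) ` ({1..k} - {j})"
    unfolding gmin_def using rest_ne[OF \<open>k\<ge>2\<close>] by (intro Min_in) auto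
  then show ?thesis by auto
qed

lemma dplus_eq:
  assumes "k \<ge> 2" "i \<in> {1..k}"
  shows "dplus E s k x (Inr i) (Inl u) = gmin E s k x i u"
proof (rule antisym)
  obtain l where l: "l \<in> {1..k}" "l \<noteq> i" "gmin E s k x i u = dist_in E x (s l) u"
  proof -
    from gmin_in[OF assms(1), where j=i and E=E and s=s and x=x and u=u] obtain l where "l\<in>{1..k}" "l \<noteq> i \<and> gmin E s k x i u = dist_in E x (s l) u" by (elim bexE)
    then show ?thesis using that by (elim conjE)
  qed
  show "dplus E s k x (Inr i) (Inl u) \<le> gmin E s k x i u"
    unfolding l(3)
  proof (rule dist_in_ge)
    fix q assume q: "dpath E q" "hd q = s l" "last q = u"
    have qne: "q \<noteq> []" using q unfolding dpath_def by auto
    have "dplus E s k x (Inr i) (Inl u) \<le> ereal (path_len (plus_len x) (Inr i # map Inl q))"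
    proof -
      have "last (Inr i # map Inl q) = Inl u" using q(3) qne by (simp add: last_map)
      then show ?thesis unfolding dplus_def
        using lift_path(1)[where s=s and l=l and k=k, OF q(1,2) l(1) assms(2) l(2)] by (intro dist_in_le) simp_all
    qed
    then show "dplus E s k x (Inr i) (Inl u) \<le> ereal (path_len x q)"
      using lift_path(2)[where s=s and l=l and k=k, OF q(1,2) l(1) assms(2) l(2)] by simp
  qed
  show "gmin E s k x i u \<le> dplus E s k x (Inr i) (Inl u)"
    unfolding dplus_def
  proof (rule dist_in_ge)
    fix P assume P: "dpath (plus_edges E s k) P" "hd P = Inr i" "last P = Inl u"
    obtain l q where lq: "l \<in> {1..k}" "l \<noteq> i" "dpath E q" "hd q = s l" "last q = u" "P = Inr i # map Inl q"
    proof -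
      from unlift_path[OF P] obtain l q where "l \<in> {1..k} \<and> l \<noteq> i \<and> dpath E q \<and> hd q = s l \<and> last q = u \<and> P = Inr i # map Inl q"
        by (elim exE)
      then show ?thesis using that by (elim conjE) 
    qed
    have "gmin E s k x i u \<le> dist_in E x (s l) u" using gmin_le[OF lq(1) lq(2)] .
    also have "\<dots> \<le> ereal (path_len x q)" using lq(3,4,5) by (rule dist_in_le)
    also have "\<dots> = ereal (path_len (plus_len x) P)"
      using lift_path(2)[where s=s and l=l and k=k, OF lq(3,4,1) assms(2) lq(2)] lq(6) by simp
    finally show "gmin E s k x i u \<le> ereal (path_len (plus_len x) P)" .
  qed
qed

lemma dplus_Inr:
  assumes "i \<noteq> i'" shows "dplus E s k x (Inr i) (Inr i') = \<infinity>"
proof -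
  have e: "{ereal (path_len (plus_len x) p) |p. dpath (plus_edges E s k) p \<and> hd p = Inr i \<and> last p = Inr i'} = {}"
  proof (rule ccontr)
    assume "\<not> ?thesis"
    then obtain p where p: "dpath (plus_edges E s k) p" "hd p = Inr i" "last p = Inr i'" by auto
    have pne: "p \<noteq> []" using p unfolding dpath_def by auto
    show False
    proof (cases "length p \<ge> 2")
      case True
      then have "(p ! (length p - 2), p ! Suc (length p - 2)) \<in> plus_edges E s k"
        using p(1) unfolding dpath_def by auto
      moreover have "Suc (length p - 2) = length p - 1" using True by simp
      then have "p ! Suc (length p - 2) = Inr i'" using p(3) pne by (simp add: last_conv_nth)
      ultimately show False using plus_edges_head by fastforce
    next
      case False
      then have "length p = 1" using pne by (cases p) (auto simp: Suc_le_eq)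
      then have "hd p = last p" by (cases p) auto
      then show False using p assms by simp
    qed
  qed
  show ?thesis unfolding dplus_def dist_in_def by (simp only: e Inf_empty) (simp add: top_ereal_def)
qed


lemma min_rest_sorted:
  fixes D :: "nat \<Rightarrow> 'b::linorder"
  assumes j: "j \<in> {1..k}" and k: "k \<ge> 2"
  shows "Min (D ` ({1..k}-{j})) = sort (map D [1..<Suc k]) ! 0
       \<or> Min (D ` ({1..k}-{j})) = sort (map D [1..<Suc k]) ! 1"
proof -
  have "j \<in> set [1..<Suc k]" using j by auto
  then obtain L1 L2 where LL: "[1..<Suc k] = L1 @ j # L2" by (metis split_list)
  have dist: "distinct (L1 @ j # L2)" using LL by (metis distinct_upt)
  have setR: "set (L1 @ L2) = {1..k} - {j}"
  proof -
    have "set (L1 @ j # L2) = {1..k}" using LL by (metis atLeastLessThanSuc_atLeastAtMost set_upt)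
    then show ?thesis using dist by auto
  qed
  define R where "R = map D (L1 @ L2)"
  have setR': "set R = D ` ({1..k}-{j})" unfolding R_def by (simp only: set_map setR)
  define ys where "ys = sort (map D [1..<Suc k])"
  have msys: "mset ys = add_mset (D j) (mset R)" unfolding ys_def R_def LL by simp
  have "length ys = k" unfolding ys_def by simp
  then obtain y0 y1 zs where ys: "ys = y0 # y1 # zs" using k
    by (cases ys; cases "tl ys") auto
  have sorted: "sorted ys" unfolding ys_def by simp
  then have s0: "\<forall>z\<in>set (y1#zs). y0 \<le> z" and s1: "\<forall>z\<in>set zs. y1 \<le> z" using ys by auto
  show ?thesis
  proof (cases "D j = y0")
    case True
    then have "mset R = mset (y1 # zs)" using msys ys by simp
    then have "set R = set (y1 # zs)" by (metis set_mset_mset)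
    then have "Min (set R) = y1" using s1 by (intro Min_eqI) auto
    then show ?thesis using setR' ys ys_def by auto
  next
    case False
    have "y0 \<in># mset ys" using ys by simp
    then have "y0 \<in># mset R" using msys False by simp
    then have y0R: "y0 \<in> set R" by simp
    have "\<forall>z\<in>set R. z \<in># mset ys" using msys by auto
    then have "\<forall>z\<in>set R. y0 \<le> z" using ys s0 by auto
    then have "Min (set R) = y0" using y0R by (intro Min_eqI) auto
    then show ?thesis using setR' ys ys_def by auto
  qed
qed

lemma gmin_triangle:
  assumes k: "k \<ge> 2" and uv: "(u,v) \<in> E" and nn: "\<forall>e\<in>E. 0 \<le> x e"
  shows "gmin E s k x j v \<le> gmin E s k x j u + ereal (x (u,v))"
proof -
  from gmin_in[OF k, where j=j and E=E and s=s and x=x and u=u] obtain l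
    where l: "l\<in>{1..k}" "l \<noteq> j \<and> gmin E s k x j u = dist_in E x (s l) u" by (elim bexE)
  have "gmin E s k x j v \<le> dist_in E x (s l) v" using l by (intro gmin_le) auto
  also have "\<dots> \<le> dist_in E x (s l) u + ereal (x (u,v))" by (rule dist_triangle[OF uv nn])
  finally show ?thesis using l by simp
qed

lemma key:
  assumes k: "k \<ge> 2" and j: "j \<in> {1..k}" and uv: "(u,v) \<in> E" and nn: "\<forall>e\<in>E. 0 \<le> x e"
    and le: "gmin E s k x j u \<le> ereal \<theta>" and gt: "ereal \<theta> < gmin E s k x j v"
  shows "(u,v) \<in> C' E s k x \<theta>"
proof -
  have "\<theta> \<in> hint (gmin E s k x j u) (x (u,v))"
    unfolding hint_def using le gt gmin_triangle[OF k uv nn, where j=j and s=s] by auto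
  moreover have "gmin E s k x j u = a1 E s k x u \<or> gmin E s k x j u = a2 E s k x u"
    unfolding gmin_def a1_def a2_def by (rule min_rest_sorted[OF j k])
  ultimately show ?thesis unfolding C'_def I1_def I2_def using uv by auto
qed


lemma crossing:
  fixes f :: "nat \<Rightarrow> ereal"
  shows "f 0 \<le> t \<Longrightarrow> \<not> f n \<le> t \<Longrightarrow> \<exists>m<n. f m \<le> t \<and> \<not> f (Suc m) \<le> t"
proof (induction n)
  case 0 then show ?case by simp
next
  case (Suc n)
  show ?case
  proof (cases "f n \<le> t")
    case True then show ?thesis using Suc by auto
  next
    case False then show ?thesis using Suc.IH[OF Suc.prems(1)] by (metis less_Suc_eq)
  qed
qed

lemma C_sub:
  assumes k: "k \<ge> 2" and nn: "\<forall>e\<in>E. 0 \<le> x e" and th: "0 < \<theta>"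
  shows "C_cut E s k x \<theta> \<subseteq> lift_edge ` C' E s k x \<theta>"
proof
  fix e assume "e \<in> C_cut E s k x \<theta>"
  then obtain i where i: "i \<in> {1..k}" and e: "e \<in> out_cut (plus_edges E s k) (ball_plus E s k x (Inr i) \<theta>)"
    unfolding C_cut_def by blast
  obtain a b where ab: "e = (a,b)" by (cases e)
  have eP: "(a,b) \<in> plus_edges E s k" and aB: "dplus E s k x (Inr i) a \<le> ereal \<theta>"
    and bB: "\<not> dplus E s k x (Inr i) b \<le> ereal \<theta>"
    using e ab unfolding out_cut_def ball_plus_def by auto
  from eP consider (G) u v where "a = Inl u" "b = Inl v" "(u,v) \<in> E"
    | (T) i' j where "a = Inr i'" "b = Inl (s j)" "i' \<in> {1..k}" "j \<in> {1..k}" "i' \<noteq> j"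
    unfolding plus_edges_def by blast
  then show "e \<in> lift_edge ` C' E s k x \<theta>"
  proof cases
    case G
    have "gmin E s k x i u \<le> ereal \<theta>" using aB G by (simp add: dplus_eq[OF k i])
    moreover have "ereal \<theta> < gmin E s k x i v" using bB G by (simp add: dplus_eq[OF k i] not_le)
    ultimately have "(u,v) \<in> C' E s k x \<theta>" by (rule key[OF k i G(3) nn])
    then show ?thesis using ab G unfolding lift_edge_def by force
  next
    case T
    have "i' = i"
    proof (rule ccontr)
      assume "i' \<noteq> i"
      then have "dplus E s k x (Inr i) a = \<infinity>" using T dplus_Inr by metis
      then show False using aB by simp
    qed
    then have "j \<noteq> i" using T by simp
    have "dplus E s k x (Inr i) b = gmin E s k x i (s j)" using T by (simp add: dplus_eq[OF k i])
    also have "\<dots> \<le> dist_in E x (s j) (s j)" using T \<open>j \<noteq> i\<close> by (intro gmin_le) auto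
    also have "\<dots> \<le> ereal (path_len x [s j])" by (rule dist_in_le) (auto simp: dpath_def)
    also have "\<dots> \<le> ereal \<theta>" using th by (simp add: path_len_def path_edges_def)
    finally show ?thesis using bB by simp
  qed
qed

lemma mwc:
  assumes k: "k \<ge> 2" and nn: "\<forall>e\<in>E. 0 \<le> x e" and feas: "dir_mc_rel_feasible E s k x"
    and th: "0 < \<theta>" "\<theta> < 1"
  shows "dir_multiway_cut E s k (C' E s k x \<theta>)"
  unfolding dir_multiway_cut_def
proof (intro conjI ballI impI notI)
  show "C' E s k x \<theta> \<subseteq> E" unfolding C'_def by auto
  fix i j assume i: "i \<in> {1..k}" and j: "j \<in> {1..k}" and ij: "i \<noteq> j"
  assume "\<exists>p. dpath (E - C' E s k x \<theta>) p \<and> hd p = s i \<and> last p = s j"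
  then obtain p where p: "dpath (E - C' E s k x \<theta>) p" "hd p = s i" "last p = s j" by blast
  have pne: "p \<noteq> []" using p unfolding dpath_def by auto
  define f where "f m = gmin E s k x j (p ! m)" for m
  have "f 0 \<le> dist_in E x (s i) (s i)" unfolding f_def using p(2) pne i ij
    by (simp add: hd_conv_nth[symmetric] gmin_le)
  also have "\<dots> \<le> ereal (path_len x [s i])" by (rule dist_in_le) (auto simp: dpath_def)
  also have "\<dots> \<le> ereal \<theta>" using th by (simp add: path_len_def path_edges_def)
  finally have f0: "f 0 \<le> ereal \<theta>" .
  have "1 \<le> gmin E s k x j (s j)" unfolding gmin_def
  proof (subst Min_ge_iff)
    show "finite ((\<lambda>l. dist_in E x (s l) (s j)) ` ({1..k} - {j}))" by simp
    show "(\<lambda>l. dist_in E x (s l) (s j)) ` ({1..k} - {j}) \<noteq> {}" using rest_ne[OF k] by simp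
    show "\<forall>a\<in>(\<lambda>l. dist_in E x (s l) (s j)) ` ({1..k} - {j}). 1 \<le> a"
    proof
      fix a assume "a \<in> (\<lambda>l. dist_in E x (s l) (s j)) ` ({1..k} - {j})"
      then obtain l where l0: "l \<in> {1..k} - {j}" "a = dist_in E x (s l) (s j)" by (rule imageE)
      then have l: "l \<in> {1..k}" "l \<noteq> j" "a = dist_in E x (s l) (s j)" by auto
      have "1 \<le> dist_in E x (s l) (s j)"
        by (rule dist_in_ge) (use feas l j in \<open>auto simp: dir_mc_rel_feasible_def\<close>)
      then show "1 \<le> a" using l by simp
    qed
  qed
  moreover have "f (length p - 1) = gmin E s k x j (s j)" unfolding f_def using p(3) pne
    by (simp add: last_conv_nth)
  moreover have "ereal \<theta> < 1" using th by simp
  ultimately have fn: "\<not> f (length p - 1) \<le> ereal \<theta>"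
    by (metis dual_order.trans linorder_not_le)
  obtain m where m: "m < length p - 1" "f m \<le> ereal \<theta>" "\<not> f (Suc m) \<le> ereal \<theta>"
    using crossing[of f, OF f0 fn] by blast
  have "(p ! m, p ! Suc m) \<in> E - C' E s k x \<theta>" using p(1) m(1) unfolding dpath_def by auto
  moreover have "(p ! m, p ! Suc m) \<in> C' E s k x \<theta>"
    using m(2,3) calculation unfolding f_def by (intro key[OF k j _ nn]) (auto simp: not_le)
  ultimately show False by blast
qed


abbreviation U :: "real measure" where "U \<equiv> uniform_measure lborel {0<..<1::real}"

lemma hint_cases: "hint a l = {} \<or> (\<exists>r. hint a l = {r..<r+l})"
proof (cases a)
  case (real r) then show ?thesis unfolding hint_def by auto
qed (auto simp: hint_def)

lemma hint_sets: "hint a l \<in> sets lborel"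
  using hint_cases[of a l] by auto

lemma hint_meas: assumes "0 \<le> l" shows "measure lborel ({0<..<1} \<inter> hint a l) \<le> l"
proof -
  from hint_cases[of a l] show ?thesis
  proof
    assume "hint a l = {}" then show ?thesis using assms by simp
  next
    assume "\<exists>r. hint a l = {r..<r+l}"
    then obtain r where r: "hint a l = {r..<r+l}" by blast
    have "measure lborel ({0<..<1} \<inter> hint a l) \<le> measure lborel {r..<r+l}"
      unfolding r by (intro measure_mono_fmeasurable) (auto simp: fmeasurable_def emeasure_lborel_Ico assms)
    also have "\<dots> = l" using assms by simp
    finally show ?thesis .
  qed
qed

lemma emeas_01: "emeasure lborel {0<..<1::real} = 1" by simp

lemma U_measure: assumes "A \<in> sets lborel" shows "measure U A = measure lborel ({0<..<1} \<inter> A)"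
  using assms by (subst measure_uniform_measure) auto

lemma U_finite: assumes "A \<in> sets lborel" shows "emeasure U A < \<infinity>"
proof -
  have "emeasure U A = emeasure lborel ({0<..<1} \<inter> A)"
    using assms by (subst emeasure_uniform_measure) (auto simp: divide_ennreal_def)
  also have "\<dots> \<le> emeasure lborel {0<..<1::real}" using assms by (intro emeasure_mono) auto
  finally show ?thesis by (simp add: le_less_trans)
qed

lemma Cset: "e \<in> E \<Longrightarrow> {\<theta>. e \<in> C' E s k x \<theta>} = I1 E s k x e \<union> I2 E s k x e"
  unfolding C'_def by auto

lemma Cset_sets: "e \<in> E \<Longrightarrow> {\<theta>. e \<in> C' E s k x \<theta>} \<in> sets lborel"
  unfolding Cset I1_def I2_def using hint_sets by auto

lemma Cset_meas:
  assumes "e \<in> E" "0 \<le> x e"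
  shows "measure U {\<theta>. e \<in> C' E s k x \<theta>} \<le> 2 * x e"
proof -
  have "measure U {\<theta>. e \<in> C' E s k x \<theta>} = measure lborel ({0<..<1} \<inter> (I1 E s k x e \<union> I2 E s k x e))"
    using assms Cset_sets[OF assms(1)] by (simp add: U_measure Cset)
  also have "\<dots> = measure lborel (({0<..<1} \<inter> I1 E s k x e) \<union> ({0<..<1} \<inter> I2 E s k x e))"
    by (simp add: Int_Un_distrib)
  also have "\<dots> \<le> measure lborel ({0<..<1} \<inter> I1 E s k x e) + measure lborel ({0<..<1} \<inter> I2 E s k x e)"
    using hint_sets[unfolded sets_lborel] by (intro measure_Un_le) (auto simp: I1_def I2_def)
  also have "\<dots> \<le> x e + x e" unfolding I1_def I2_def by (intro add_mono hint_meas assms)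
  finally show ?thesis by simp
qed

lemma sum_C'_eq: fixes w :: "'a \<times> 'a \<Rightarrow> real" assumes "finite E"
  shows "sum w (C' E s k x \<theta>) = (\<Sum>e\<in>E. w e * indicator {\<theta>. e \<in> C' E s k x \<theta>} \<theta>)"
proof -
  have "C' E s k x \<theta> = {e \<in> E. e \<in> C' E s k x \<theta>}" unfolding C'_def by auto
  then have "sum w (C' E s k x \<theta>) = (\<Sum>e\<in>E. if e \<in> C' E s k x \<theta> then w e else 0)"
    using sum.inter_filter[OF assms] by metis
  also have "\<dots> = (\<Sum>e\<in>E. w e * indicator {\<theta>. e \<in> C' E s k x \<theta>} \<theta>)"
    by (intro sum.cong) (auto simp: indicator_def)
  finally show ?thesis .
qed


theorem mainTheorem5:
  fixes V :: "'a set" and E :: "('a \<times> 'a) set" and w x :: "'a \<times> 'a \<Rightarrow> real"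
    and s :: "nat \<Rightarrow> 'a" and k :: nat
  assumes "finite V" and "E \<subseteq> V \<times> V"
    and "\<forall>e\<in>E. 0 \<le> w e"
    and "k \<ge> 2" and "inj_on s {1..k}" and "s ` {1..k} \<subseteq> V"
    and "dir_mc_rel_feasible E s k x"
  shows "(\<forall>\<theta>\<in>{0<..<1}. C_cut E s k x \<theta> \<subseteq> lift_edge ` C' E s k x \<theta>
                        \<and> dir_multiway_cut E s k (C' E s k x \<theta>))
    \<and> (\<forall>e\<in>E. {\<theta>. e \<in> C' E s k x \<theta>} \<in> sets lborel
            \<and> measure (uniform_measure lborel {0<..<1}) {\<theta>. e \<in> C' E s k x \<theta>} \<le> 2 * x e)
    \<and> integrable (uniform_measure lborel {0<..<1::real}) (\<lambda>\<theta>. sum w (C' E s k x \<theta>))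
    \<and> (\<integral>\<theta>. sum w (C' E s k x \<theta>) \<partial>uniform_measure lborel {0<..<1::real})
         \<le> 2 * (\<Sum>e\<in>E. w e * x e)"
proof -
  have nn: "\<forall>e\<in>E. 0 \<le> x e" using assms(7) unfolding dir_mc_rel_feasible_def by blast
  have fin: "finite E" using assms(1,2) by (meson finite_SigmaI finite_subset)
  have P1: "\<forall>\<theta>\<in>{0<..<1}. C_cut E s k x \<theta> \<subseteq> lift_edge ` C' E s k x \<theta>
                        \<and> dir_multiway_cut E s k (C' E s k x \<theta>)"
    using C_sub[OF assms(4) nn] mwc[OF assms(4) nn assms(7)] by auto
  have P2: "\<forall>e\<in>E. {\<theta>. e \<in> C' E s k x \<theta>} \<in> sets lborel
            \<and> measure (uniform_measure lborel {0<..<1}) {\<theta>. e \<in> C' E s k x \<theta>} \<le> 2 * x e"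
    using Cset_sets Cset_meas nn by blast
  have feq: "(\<lambda>\<theta>. sum w (C' E s k x \<theta>)) = (\<lambda>\<theta>. \<Sum>e\<in>E. w e * indicator {\<theta>. e \<in> C' E s k x \<theta>} \<theta>)"
    using sum_C'_eq[OF fin] by blast
  have ints: "integrable U (\<lambda>\<theta>. w e * indicator {\<theta>. e \<in> C' E s k x \<theta>} \<theta>)" if "e \<in> E" for e
    using Cset_sets[OF that] U_finite[OF Cset_sets[OF that]]
    by (intro integrable_mult_right integrable_real_indicator) auto
  have P3: "integrable U (\<lambda>\<theta>. sum w (C' E s k x \<theta>))"
    unfolding feq by (rule Bochner_Integration.integrable_sum, rule ints)
  have "(\<integral>\<theta>. sum w (C' E s k x \<theta>) \<partial>U) = (\<Sum>e\<in>E. w e * measure U {\<theta>. e \<in> C' E s k x \<theta>})"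
    unfolding feq
  proof (subst Bochner_Integration.integral_sum)
    show "\<And>e. e \<in> E \<Longrightarrow> integrable U (\<lambda>\<theta>. w e * indicator {\<theta>. e \<in> C' E s k x \<theta>} \<theta>)"
      by (rule ints)
    show "(\<Sum>e\<in>E. LINT \<theta>|U. w e * indicator {\<theta>. e \<in> C' E s k x \<theta>} \<theta>)
       = (\<Sum>e\<in>E. w e * measure U {\<theta>. e \<in> C' E s k x \<theta>})"
      by (intro sum.cong refl) (simp add: space_uniform_measure)
  qed
  also have "\<dots> \<le> (\<Sum>e\<in>E. w e * (2 * x e))"
    using P2 assms(3) by (intro sum_mono mult_left_mono) auto
  also have "\<dots> = 2 * (\<Sum>e\<in>E. w e * x e)" by (simp add: sum_distrib_left algebra_simps)
  finally show ?thesis using P1 P2 P3 by blast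
qed

end
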